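(* Let $A=KQ/I$ be a finite-dimensional gentle algebra and let $C=c_1\cdots c_m$ be a string for $A$ with an intersecting auto-reaching given by substrings $C[i,j]$ and $C[i',j']$. Then the two substrings are oriented in the same direction in $C$: the word $c_i\cdots c_{j-1}$ equals the word $c_{i'}\cdots c_{j'-1}$, and $C[i,j]$ is not the inverse walk of $C[i',j']$.
   Context: Letters are arrows $\alpha\in Q_1$ (direct, traversed from $s(\alpha)$ to $t(\alpha)$) and formal inverses $\alpha^{-1}$ (inverse, traversed from $t(\alpha)$ to $s(\alpha)$). A string is a reduced walk (no letter followed by its own inverse) in $Q$ avoiding the relations of $I$ and their inverses; it is identified with its inverse walk. For $C=c_1\cdots c_m$ with vertex positions $v_1,\dots,v_{m+1}$ and $1\le i\le j\le m+1$, $C[i,j]=c_i\cdots c_{j-1}$ (the trivial string at $v_i$ if $i=j$). $C[i,j]$ is on top of $C$ if ($i=1$ or $c_{i-1}$ is inverse) and ($j=m+1$ or $c_j$ is direct); it is at the bottom of $C$ if ($i=1$ or $c_{i-1}$ is direct) and ($j=m+1$ or $c_j$ is inverse). An auto-reaching of $C$ is given by a substring $C[i,j]$ on top of $C$ and a substring $C[i',j']$ at the bottom of $C$ which are equal as strings (equal or mutually inverse walks) and satisfy the swinging arms condition: if $i'=1$ then $i\neq1$, and if $j'=m+1$ then $j\ne m+1$. It is intersecting if $i<i'\le j<j'$ or $i'<i\le j'<j$. *)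

theory Defs
  imports Main
begin

text \<open>Paths are written left to right: a path alpha beta requires t alpha = s beta.
  A gentle algebra KQ/I has I generated by a set R of length-two paths (a,b).\<close>

datatype 'a letter = Dir 'a | Inv 'a

fun arr :: "'a letter \<Rightarrow> 'a" where
  "arr (Dir a) = a" | "arr (Inv a) = a"

fun is_dir :: "'a letter \<Rightarrow> bool" where
  "is_dir (Dir a) = True" | "is_dir (Inv a) = False"

fun is_inv :: "'a letter \<Rightarrow> bool" where
  "is_inv (Dir a) = False" | "is_inv (Inv a) = True"

fun linv :: "'a letter \<Rightarrow> 'a letter" where
  "linv (Dir a) = Inv a" | "linv (Inv a) = Dir a"

fun lsrc :: "('a \<Rightarrow> 'v) \<Rightarrow> ('a \<Rightarrow> 'v) \<Rightarrow> 'a letter \<Rightarrow> 'v" where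
  "lsrc s t (Dir a) = s a" | "lsrc s t (Inv a) = t a"

fun ltgt :: "('a \<Rightarrow> 'v) \<Rightarrow> ('a \<Rightarrow> 'v) \<Rightarrow> 'a letter \<Rightarrow> 'v" where
  "ltgt s t (Dir a) = t a" | "ltgt s t (Inv a) = s a"

text \<open>Nontrivial paths of Q avoiding the relations (i.e. nonzero paths in KQ/I).\<close>
definition nonzero_path :: "'a set \<Rightarrow> ('a \<Rightarrow> 'v) \<Rightarrow> ('a \<Rightarrow> 'v) \<Rightarrow> ('a \<times> 'a) set \<Rightarrow> 'a list \<Rightarrow> bool" where
  "nonzero_path Q1 s t R p \<longleftrightarrow> p \<noteq> [] \<and> set p \<subseteq> Q1 \<and>
     (\<forall>k. Suc k < length p \<longrightarrow> t (p ! k) = s (p ! Suc k) \<and> (p ! k, p ! Suc k) \<notin> R)"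

definition gentle :: "'v set \<Rightarrow> 'a set \<Rightarrow> ('a \<Rightarrow> 'v) \<Rightarrow> ('a \<Rightarrow> 'v) \<Rightarrow> ('a \<times> 'a) set \<Rightarrow> bool" where
  "gentle Q0 Q1 s t R \<longleftrightarrow>
     finite Q0 \<and> finite Q1 \<and> (\<forall>a\<in>Q1. s a \<in> Q0 \<and> t a \<in> Q0) \<and>
     R \<subseteq> {(a, b). a \<in> Q1 \<and> b \<in> Q1 \<and> t a = s b} \<and>
     (\<forall>v\<in>Q0. card {a\<in>Q1. s a = v} \<le> 2 \<and> card {a\<in>Q1. t a = v} \<le> 2) \<and>
     (\<forall>a\<in>Q1. card {b\<in>Q1. t a = s b \<and> (a, b) \<in> R} \<le> 1 \<and>
              card {b\<in>Q1. t a = s b \<and> (a, b) \<notin> R} \<le> 1) \<and>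
     (\<forall>b\<in>Q1. card {a\<in>Q1. t a = s b \<and> (a, b) \<in> R} \<le> 1 \<and>
              card {a\<in>Q1. t a = s b \<and> (a, b) \<notin> R} \<le> 1) \<and>
     finite {p. nonzero_path Q1 s t R p}"

type_synonym ('v, 'a) walk = "'v \<times> 'a letter list"

definition is_string :: "'v set \<Rightarrow> 'a set \<Rightarrow> ('a \<Rightarrow> 'v) \<Rightarrow> ('a \<Rightarrow> 'v) \<Rightarrow> ('a \<times> 'a) set \<Rightarrow> ('v, 'a) walk \<Rightarrow> bool" where
  "is_string Q0 Q1 s t R C \<longleftrightarrow> (case C of (v, cs) \<Rightarrow>
     v \<in> Q0 \<and> (\<forall>c\<in>set cs. arr c \<in> Q1) \<and>
     (cs \<noteq> [] \<longrightarrow> lsrc s t (hd cs) = v) \<and>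
     (\<forall>k. Suc k < length cs \<longrightarrow>
        ltgt s t (cs ! k) = lsrc s t (cs ! Suc k) \<and>
        cs ! Suc k \<noteq> linv (cs ! k) \<and>
        (\<forall>a b. (a, b) \<in> R \<longrightarrow>
           \<not> (cs ! k = Dir a \<and> cs ! Suc k = Dir b) \<and>
           \<not> (cs ! k = Inv b \<and> cs ! Suc k = Inv a))))"

text \<open>Vertex positions v_1, ..., v_(m+1) (1-based).\<close>
definition vpos :: "('a \<Rightarrow> 'v) \<Rightarrow> ('a \<Rightarrow> 'v) \<Rightarrow> ('v, 'a) walk \<Rightarrow> nat \<Rightarrow> 'v" where
  "vpos s t C k = (if k \<le> 1 then fst C else ltgt s t (snd C ! (k - 2)))"

text \<open>C[i,j] = c_i ... c_(j-1), starting at v_i (1-based).\<close>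
definition substr :: "('a \<Rightarrow> 'v) \<Rightarrow> ('a \<Rightarrow> 'v) \<Rightarrow> ('v, 'a) walk \<Rightarrow> nat \<Rightarrow> nat \<Rightarrow> ('v, 'a) walk" where
  "substr s t C i j = (vpos s t C i, take (j - i) (drop (i - 1) (snd C)))"

definition winv :: "('a \<Rightarrow> 'v) \<Rightarrow> ('a \<Rightarrow> 'v) \<Rightarrow> ('v, 'a) walk \<Rightarrow> ('v, 'a) walk" where
  "winv s t C = (vpos s t C (length (snd C) + 1), rev (map linv (snd C)))"

definition string_eq :: "('a \<Rightarrow> 'v) \<Rightarrow> ('a \<Rightarrow> 'v) \<Rightarrow> ('v, 'a) walk \<Rightarrow> ('v, 'a) walk \<Rightarrow> bool" where
  "string_eq s t D E \<longleftrightarrow> D = E \<or> D = winv s t E"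

definition on_top :: "('v, 'a) walk \<Rightarrow> nat \<Rightarrow> nat \<Rightarrow> bool" where
  "on_top C i j \<longleftrightarrow> 1 \<le> i \<and> i \<le> j \<and> j \<le> length (snd C) + 1 \<and>
     (i = 1 \<or> is_inv (snd C ! (i - 2))) \<and>
     (j = length (snd C) + 1 \<or> is_dir (snd C ! (j - 1)))"

definition at_bottom :: "('v, 'a) walk \<Rightarrow> nat \<Rightarrow> nat \<Rightarrow> bool" where
  "at_bottom C i j \<longleftrightarrow> 1 \<le> i \<and> i \<le> j \<and> j \<le> length (snd C) + 1 \<and>
     (i = 1 \<or> is_dir (snd C ! (i - 2))) \<and>
     (j = length (snd C) + 1 \<or> is_inv (snd C ! (j - 1)))"

definition auto_reaching :: "('a \<Rightarrow> 'v) \<Rightarrow> ('a \<Rightarrow> 'v) \<Rightarrow> ('v, 'a) walk \<Rightarrow> nat \<Rightarrow> nat \<Rightarrow> nat \<Rightarrow> nat \<Rightarrow> bool" where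
  "auto_reaching s t C i j i' j' \<longleftrightarrow>
     on_top C i j \<and> at_bottom C i' j' \<and>
     string_eq s t (substr s t C i j) (substr s t C i' j') \<and>
     (i' = 1 \<longrightarrow> i \<noteq> 1) \<and>
     (j' = length (snd C) + 1 \<longrightarrow> j \<noteq> length (snd C) + 1)"

definition intersecting :: "nat \<Rightarrow> nat \<Rightarrow> nat \<Rightarrow> nat \<Rightarrow> bool" where
  "intersecting i j i' j' \<longleftrightarrow> (i < i' \<and> i' \<le> j \<and> j < j') \<or> (i' < i \<and> i \<le> j' \<and> j' < j)"

end

theory Submission
  imports Defs
begin

lemma linv_neq: "linv c \<noteq> c"
  by (cases c) auto

lemma linv_linv: "linv (linv c) = c"
  by (cases c) auto

lemma core:
  fixes cs :: "'a letter list"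
  assumes red: "\<forall>k. Suc k < length cs \<longrightarrow> cs ! Suc k \<noteq> linv (cs ! k)"
    and n: "n \<ge> 1" and xy: "x \<le> y" "y \<le> x + n" "y + n \<le> length cs"
    and H: "\<forall>k<n. cs ! (x + k) = linv (cs ! (y + n - 1 - k))"
  shows False
proof -
  define e where "e = x + y + n - 1"
  define m where "m = e div 2"
  show False
  proof (cases "even e")
    case True
    have e2: "e = 2 * m" using True m_def by presburger
    have "cs ! m = linv (cs ! m)"
    proof (cases "m < x + n")
      case True
      have "m \<ge> x" using e2 e_def xy n by linarith
      have "y + n - 1 - (m - x) = m" using e2 e_def xy n \<open>m \<ge> x\<close> by auto
      moreover have "x + (m - x) = m" using \<open>m \<ge> x\<close> by simp
      ultimately show ?thesis using H[rule_format, of "m - x"] True by simp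
    next
      case False
      have "y + n - 1 - (y + n - 1 - m) = m" using e2 e_def xy n False by auto
      moreover have "x + (y + n - 1 - m) = m" using e2 e_def xy n False by auto
      moreover have "y + n - 1 - m < n" using False xy n by linarith
      ultimately show ?thesis using H[rule_format, of "y + n - 1 - m"] by simp
    qed
    then show False using linv_neq by metis
  next
    case False
    have e2: "e = 2 * m + 1" using False m_def by presburger
    have len: "Suc m < length cs" using e2 e_def xy n by linarith
    have "cs ! m = linv (cs ! Suc m)"
    proof (cases "m < x + n")
      case True
      have "m \<ge> x" using e2 e_def xy n by linarith
      have "y + n - 1 - (m - x) = Suc m" using e2 e_def xy n \<open>m \<ge> x\<close> by linarith
      moreover have "x + (m - x) = m" using \<open>m \<ge> x\<close> by simp
      ultimately show ?thesis using H[rule_format, of "m - x"] True by simp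
    next
      case False
      have "y + n - 1 - (y + n - 2 - m) = Suc m" using e2 e_def xy n False by linarith
      moreover have "x + (y + n - 2 - m) = m" using e2 e_def xy n False by linarith
      moreover have "y + n - 2 - m < n" using False xy n by linarith
      ultimately show ?thesis using H[rule_format, of "y + n - 2 - m"] by simp
    qed
    then have "cs ! Suc m = linv (cs ! m)" using linv_linv by metis
    then show False using red len by blast
  qed
qed

lemma substr_props:
  assumes "1 \<le> i" "i \<le> j" "j \<le> length (snd C) + 1"
  shows "length (snd (substr s t C i j)) = j - i"
    "\<And>k. k < j - i \<Longrightarrow> snd (substr s t C i j) ! k = snd C ! (i - 1 + k)"
  using assms by (auto simp: substr_def)

theorem mainTheorem7:
  fixes Q0 :: "'v set" and Q1 :: "'a set" and s t :: "'a \<Rightarrow> 'v"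
    and R :: "('a \<times> 'a) set" and C :: "('v, 'a) walk" and i j i' j' :: nat
  assumes "gentle Q0 Q1 s t R"
    and "is_string Q0 Q1 s t R C"
    and "auto_reaching s t C i j i' j'"
    and "intersecting i j i' j'"
  shows "snd (substr s t C i j) = snd (substr s t C i' j') \<and>
         substr s t C i j \<noteq> winv s t (substr s t C i' j')"
proof -
  obtain v cs where C: "C = (v, cs)" by (cases C)
  have red: "\<forall>k. Suc k < length cs \<longrightarrow> cs ! Suc k \<noteq> linv (cs ! k)"
    using assms(2) unfolding is_string_def C by auto
  have top: "on_top C i j" and bot: "at_bottom C i' j'"
    and seq: "string_eq s t (substr s t C i j) (substr s t C i' j')"
    using assms(3) unfolding auto_reaching_def by auto
  have b1: "1 \<le> i" "i \<le> j" "j \<le> length cs + 1" using top unfolding on_top_def C by auto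
  have b2: "1 \<le> i'" "i' \<le> j'" "j' \<le> length cs + 1" using bot unfolding at_bottom_def C by auto
  define L where "L = snd (substr s t C i j)"
  define M where "M = snd (substr s t C i' j')"
  define n where "n = j - i"
  have lL: "length L = n" and eL: "\<And>k. k < n \<Longrightarrow> L ! k = cs ! (i - 1 + k)"
    using substr_props[where i=i and j=j and C=C and s=s and t=t] b1 unfolding L_def n_def C by auto
  have lM: "length M = j' - i'" and eM: "\<And>k. k < j' - i' \<Longrightarrow> M ! k = cs ! (i' - 1 + k)"
    using substr_props[where i=i' and j=j' and C=C and s=s and t=t] b2 unfolding M_def C by auto
  have lMn: "length M = n"
    using seq lL lM unfolding string_eq_def winv_def L_def M_def by auto
  have n1: "n \<ge> 1" using assms(4) unfolding intersecting_def n_def by auto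
  have key: "L \<noteq> rev (map linv M)"
  proof
    assume eq: "L = rev (map linv M)"
    have H: "\<forall>k<n. cs ! (i - 1 + k) = linv (cs ! (i' - 1 + (n - 1 - k)))"
    proof (intro allI impI)
      fix k assume k: "k < n"
      have "L ! k = rev (map linv M) ! k" using eq by simp
      also have "\<dots> = linv (M ! (n - 1 - k))" using k lMn by (simp add: rev_nth)
      also have "\<dots> = linv (cs ! (i' - 1 + (n - 1 - k)))" using eM[of "n - 1 - k"] k lMn lM by simp
      finally show "cs ! (i - 1 + k) = linv (cs ! (i' - 1 + (n - 1 - k)))" using eL k by simp
    qed
    show False
    proof (cases "i < i' \<and> i' \<le> j \<and> j < j'")
      case True
      show False
      proof (rule core[OF red n1, of "i - 1" "i' - 1"])
        show "i - 1 \<le> i' - 1" "i' - 1 \<le> i - 1 + n" "i' - 1 + n \<le> length cs"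
          using True b1 b2 lM lMn n_def by auto
        show "\<forall>k<n. cs ! (i - 1 + k) = linv (cs ! (i' - 1 + n - 1 - k))"
        proof (intro allI impI)
          fix k assume k: "k < n"
          have "i' - 1 + n - 1 - k = i' - 1 + (n - 1 - k)" using k by simp
          then show "cs ! (i - 1 + k) = linv (cs ! (i' - 1 + n - 1 - k))" using H k by simp
        qed
      qed
    next
      case False
      then have F: "i' < i \<and> i \<le> j' \<and> j' < j" using assms(4) unfolding intersecting_def by auto
      show False
      proof (rule core[OF red n1, of "i' - 1" "i - 1"])
        show "i' - 1 \<le> i - 1" "i - 1 \<le> i' - 1 + n" "i - 1 + n \<le> length cs"
          using F b1 b2 lM lMn n_def by auto
        show "\<forall>k<n. cs ! (i' - 1 + k) = linv (cs ! (i - 1 + n - 1 - k))"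
        proof (intro allI impI)
          fix k assume k: "k < n"
          have a: "i - 1 + n - 1 - k = i - 1 + (n - 1 - k)" using k by simp
          have b: "n - 1 - (n - 1 - k) = k" using k by simp
          have "cs ! (i - 1 + (n - 1 - k)) = linv (cs ! (i' - 1 + k))"
            using H[rule_format, of "n - 1 - k"] k b by simp
          then show "cs ! (i' - 1 + k) = linv (cs ! (i - 1 + n - 1 - k))"
            using a linv_linv by metis
        qed
      qed
    qed
  qed
  have w: "\<And>D. snd (winv s t D) = rev (map linv (snd D))" by (simp add: winv_def)
  have "L = M" using seq key w unfolding string_eq_def L_def M_def by metis
  moreover have "substr s t C i j \<noteq> winv s t (substr s t C i' j')"
    using key w unfolding L_def M_def by metis
  ultimately show ?thesis unfolding L_def M_def by simp
qed

end
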